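(* There is a constant $C_2>0$ such that for every $\ell\ge0$ and every path $p_0,p_1,\dots,p_\ell$ in the graph $G_1+G_2$, its $(G_1+G_2)$-weight $\prod_{i=1}^{\ell}(G_1+G_2)(p_{i-1},p_i)$ is at most $$C_2^{\,\ell+\max_{0\le i\le\ell}|p_i|}.$$
   Context: $\mathbb N=\{0,1,2,\dots\}$; for $t\in\mathbb R$, $\langle t\rangle:=1+|t|$. A directed weighted $\mathbb Z^2$-graph is a map $G\colon\mathbb Z^2\times\mathbb Z^2\to[0,\infty)$ ($G(p,q)$ = weight of edge $p\to q$, $0$ meaning no edge); a path of length $\ell$ is $p_0,\dots,p_\ell$ with $G(p_{i-1},p_i)>0$, and its $G$-weight is $\prod_{i=1}^\ell G(p_{i-1},p_i)$. The sum is $(G+G')(p,q)=G(p,q)+G'(p,q)$ and the product is $(G\cdot G')(p,q)=\sum_{r\in\mathbb Z^2}G(p,r)G'(r,q)$. $G_1$ is the graph whose only nonzero weights are: $G_1((k,h),(k-2,h+2))=\frac{\langle\max\{k,|h|\}\rangle}{\langle h\rangle}$ for $k\ge2$, $h\in\mathbb Z$; $G_1((k,h),(k,h))=1$ for $k\ge0$, $h\in\mathbb Z$; $G_1((k,h),(k+2,h-2))=\frac{\langle h\rangle}{\langle\max\{k,|h|\}\rangle}$ for $k\ge0$, $h\in\mathbb Z$. $G_2((k,h),(k',h'))=1$ if $k,k'\ge0$, $(k,h)\ne(k',h')$ and $(k'-k,h'-h)\in\{c_1(1,0)+c_2(-1,2): c_1,c_2\in\mathbb N\}$, and $G_2((k,h),(k',h'))=0$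 otherwise. *)

theory Defs
  imports "HOL-Analysis.Analysis"
begin

type_synonym pt = "int \<times> int"

definition jb :: "real \<Rightarrow> real" where
  "jb t = 1 + \<bar>t\<bar>"

definition G1 :: "pt \<Rightarrow> pt \<Rightarrow> real" where
  "G1 p q = (let (k, h) = p; (k', h') = q in
     if k \<ge> 2 \<and> k' = k - 2 \<and> h' = h + 2 then jb (real_of_int (max k \<bar>h\<bar>)) / jb (real_of_int h)
     else if k \<ge> 0 \<and> k' = k \<and> h' = h then 1
     else if k \<ge> 0 \<and> k' = k + 2 \<and> h' = h - 2 then jb (real_of_int h) / jb (real_of_int (max k \<bar>h\<bar>))
     else 0)"

definition G2 :: "pt \<Rightarrow> pt \<Rightarrow> real" where
  "G2 p q = (let (k, h) = p; (k', h') = q in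
     if k \<ge> 0 \<and> k' \<ge> 0 \<and> p \<noteq> q \<and>
        (\<exists>c1 c2 :: nat. k' - k = int c1 - int c2 \<and> h' - h = 2 * int c2)
     then 1 else 0)"

definition Gsum :: "(pt \<Rightarrow> pt \<Rightarrow> real) \<Rightarrow> (pt \<Rightarrow> pt \<Rightarrow> real) \<Rightarrow> pt \<Rightarrow> pt \<Rightarrow> real" where
  "Gsum G G' p q = G p q + G' p q"

definition is_path :: "(pt \<Rightarrow> pt \<Rightarrow> real) \<Rightarrow> (nat \<Rightarrow> pt) \<Rightarrow> nat \<Rightarrow> bool" where
  "is_path G p l \<longleftrightarrow> (\<forall>i\<in>{1..l}. G (p (i - 1)) (p i) > 0)"

definition path_weight :: "(pt \<Rightarrow> pt \<Rightarrow> real) \<Rightarrow> (nat \<Rightarrow> pt) \<Rightarrow> nat \<Rightarrow> real" where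
  "path_weight G p l = (\<Prod>i=1..l. G (p (i - 1)) (p i))"

definition ptnorm :: "pt \<Rightarrow> real" where
  "ptnorm p = sqrt (real_of_int (fst p) ^ 2 + real_of_int (snd p) ^ 2)"

end

theory Submission imports Defs begin

lemma pow_fact_le_exp:
  fixes x :: real assumes "0 \<le> x" shows "x ^ n / fact n \<le> exp x"
proof -
  have "(\<Sum>i\<in>{n}. inverse (fact i) * x ^ i) \<le> (\<Sum>i. inverse (fact i) * x ^ i)"
    by (rule sum_le_suminf[OF summable_exp]) (use assms in auto)
  thus ?thesis by (simp add: exp_def scaleR_conv_of_real divide_inverse mult.commute)
qed

lemma prod_A_le_exp:
  fixes A :: real assumes "0 \<le> A" shows "(\<Prod>i<m. A / real (Suc i)) \<le> exp A"
proof -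
  have "(\<Prod>i<m. A / real (Suc i)) = A ^ m / fact m"
  proof (induction m)
    case (Suc m)
    have "(\<Prod>i<Suc m. A / real (Suc i)) = (A ^ m / fact m) * (A / real (Suc m))"
      using Suc by simp
    also have "\<dots> = A ^ Suc m / fact (Suc m)" by (simp add: field_simps)
    finally show ?case .
  qed simp
  thus ?thesis using pow_fact_le_exp[OF assms] by simp
qed

lemma jb_ge1: "jb x \<ge> 1" unfolding jb_def by simp
lemma jb_pos: "jb x > 0" unfolding jb_def by simp

definition rr :: "int \<Rightarrow> int \<Rightarrow> real" where
  "rr s j = jb (real_of_int (max (s - j) \<bar>j\<bar>)) / jb (real_of_int j)"

definition LL :: "nat \<Rightarrow> int \<Rightarrow> int set" where
  "LL N h = {j. - int N - 2 \<le> j \<and> j < h \<and> even (h - j)}"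

definition Phi :: "nat \<Rightarrow> pt \<Rightarrow> real" where
  "Phi N p = (\<Prod>j\<in>LL N (snd p). rr (fst p + snd p) j)"

lemma rr_ge1: "rr s j \<ge> 1"
  unfolding rr_def jb_def by (simp add: field_simps)

lemma rr_mono: "s \<le> s' \<Longrightarrow> rr s j \<le> rr s' j"
  unfolding rr_def jb_def by (intro divide_right_mono) auto

lemma LL_finite: "finite (LL N h)"
  by (rule finite_subset[of _ "{- int N - 2..<h}"]) (auto simp: LL_def)

lemma LL_insert: "- int N - 2 \<le> h \<Longrightarrow> LL N (h + 2) = insert h (LL N h)"
  unfolding LL_def by auto presburger+

lemma LL_notin: "h \<notin> LL N h" unfolding LL_def by auto

lemma LL_mono: "h \<le> h' \<Longrightarrow> even (h' - h) \<Longrightarrow> LL N h \<subseteq> LL N h'"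
  unfolding LL_def by auto

lemma Phi_ge1: "Phi N p \<ge> 1"
  unfolding Phi_def using rr_ge1 by (intro prod_ge_1) auto

lemma Phi_up: "- int N - 2 \<le> h \<Longrightarrow> Phi N (k - 2, h + 2) = rr (k + h) h * Phi N (k, h)"
  unfolding Phi_def by (simp add: LL_insert LL_finite LL_notin)

lemma Phi_mono:
  assumes "k + h \<le> k' + h'" "h \<le> h'" "even (h' - h)"
  shows "Phi N (k, h) \<le> Phi N (k', h')"
proof -
  have "Phi N (k, h) \<le> (\<Prod>j\<in>LL N h. rr (k' + h') j)"
    unfolding Phi_def fst_conv snd_conv using rr_mono[OF assms(1)] rr_ge1
    by (intro prod_mono) (auto intro: order_trans[OF zero_le_one])
  also have "\<dots> \<le> (\<Prod>j\<in>LL N h'. rr (k' + h') j)"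
    using rr_ge1 LL_mono[OF assms(2,3)] LL_finite
    by (intro prod_mono2) (auto intro: order_trans[OF zero_le_one])
  finally show ?thesis unfolding Phi_def by simp
qed

lemma ratio9:
  fixes a b c d :: real
  assumes "0 < b" "0 < d" "0 \<le> a" "0 \<le> c" "a \<le> 3 * d" "c \<le> 3 * b"
  shows "(a / b) * (c / d) \<le> 9"
proof -
  have "a * c \<le> (3 * d) * (3 * b)" using assms by (intro mult_mono) auto
  hence "a * c \<le> 9 * (b * d)" by (simp add: algebra_simps)
  thus ?thesis using assms by (simp add: field_simps)
qed

lemma step:
  assumes pos: "Gsum G1 G2 (k,h) (k',h') > 0" and hb: "- int N \<le> h'"
  shows "Gsum G1 G2 (k,h) (k',h') * Phi N (k,h) \<le> 9 * Phi N (k',h')"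
proof -
  have G1eq: "G1 (k,h) (k',h') = (if k \<ge> 2 \<and> k' = k - 2 \<and> h' = h + 2 then jb (real_of_int (max k \<bar>h\<bar>)) / jb (real_of_int h)
     else if k \<ge> 0 \<and> k' = k \<and> h' = h then 1
     else if k \<ge> 0 \<and> k' = k + 2 \<and> h' = h - 2 then jb (real_of_int h) / jb (real_of_int (max k \<bar>h\<bar>))
     else 0)" by (simp add: G1_def)
  have G2eq: "G2 (k,h) (k',h') = (if k \<ge> 0 \<and> k' \<ge> 0 \<and> (k,h) \<noteq> (k',h') \<and>
        (\<exists>c1 c2 :: nat. k' - k = int c1 - int c2 \<and> h' - h = 2 * int c2) then 1 else 0)"
    by (simp add: G2_def)
  have P0: "Phi N (k,h) \<ge> 0" "Phi N (k',h') \<ge> 0" using Phi_ge1 by (auto intro: order_trans[OF zero_le_one])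
  show ?thesis
  proof (cases "k \<ge> 2 \<and> k' = k - 2 \<and> h' = h + 2")
    case True
    have "G2 (k,h) (k',h') = 0"
    proof -
      have "\<not> (\<exists>c1 c2 :: nat. k' - k = int c1 - int c2 \<and> h' - h = 2 * int c2)"
        using True by auto
      thus ?thesis using G2eq by simp
    qed
    moreover have "G1 (k,h) (k',h') = rr (k + h) h"
      using True G1eq by (simp add: rr_def)
    moreover have "Phi N (k',h') = rr (k + h) h * Phi N (k,h)"
      using True hb Phi_up[of N h k] by simp
    ultimately show ?thesis using P0 by (simp add: Gsum_def mult.commute)
  next
    case F1: False
    show ?thesis
    proof (cases "k \<ge> 0 \<and> k' = k \<and> h' = h")
      case True
      then show ?thesis using G1eq G2eq F1 P0 by (simp add: Gsum_def)
    next
      case F2: False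
      show ?thesis
      proof (cases "k \<ge> 0 \<and> k' = k + 2 \<and> h' = h - 2")
        case True
        have "G2 (k,h) (k',h') = 0"
        proof -
          have "\<not> (\<exists>c1 c2 :: nat. k' - k = int c1 - int c2 \<and> h' - h = 2 * int c2)"
            using True by auto
          thus ?thesis using G2eq by simp
        qed
        moreover have g1: "G1 (k,h) (k',h') = jb (real_of_int h) / jb (real_of_int (max k \<bar>h\<bar>))"
          using True G1eq F1 F2 by simp
        moreover have ph: "Phi N (k,h) = rr (k + h) (h - 2) * Phi N (k',h')"
          using True hb Phi_up[of N "h - 2" "k + 2"] by simp
        moreover have r9: "jb (real_of_int h) / jb (real_of_int (max k \<bar>h\<bar>)) * rr (k + h) (h - 2) \<le> 9"
          unfolding rr_def
        proof (rule ratio9)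
          show "jb (real_of_int h) \<le> 3 * jb (real_of_int (h - 2))" unfolding jb_def by (simp add: abs_if)
          show "jb (real_of_int (max (k + h - (h - 2)) \<bar>h - 2\<bar>)) \<le> 3 * jb (real_of_int (max k \<bar>h\<bar>))"
            unfolding jb_def by simp
        qed (auto simp: jb_def)
        ultimately have "Gsum G1 G2 (k,h) (k',h') * Phi N (k,h) =
           (jb (real_of_int h) / jb (real_of_int (max k \<bar>h\<bar>)) * rr (k + h) (h - 2)) * Phi N (k',h')"
          by (simp add: Gsum_def)
        also have "\<dots> \<le> 9 * Phi N (k',h')" using r9 P0(2) by (rule mult_right_mono)
        finally show ?thesis .
      next
        case F3: False
        have g1: "G1 (k,h) (k',h') = 0" using G1eq F1 F2 F3 by simp
        hence "G2 (k,h) (k',h') > 0" using pos by (simp add: Gsum_def)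
        hence c: "k \<ge> 0 \<and> k' \<ge> 0 \<and> (\<exists>c1 c2 :: nat. k' - k = int c1 - int c2 \<and> h' - h = 2 * int c2)"
          and g2: "G2 (k,h) (k',h') = 1"
          using G2eq by (auto split: if_splits)
        then obtain c1 c2 :: nat where cc: "k' - k = int c1 - int c2" "h' - h = 2 * int c2" by blast
        have "Phi N (k,h) \<le> Phi N (k',h')"
          by (rule Phi_mono) (use cc in auto)
        thus ?thesis using g1 g2 P0 by (simp add: Gsum_def)
      qed
    qed
  qed
qed

lemma img1: "{0..<int N} = int ` {..<N}"
proof -
  have "x \<in> int ` {..<N}" if "x \<in> {0..<int N}" for x
    using that by (intro image_eqI[of _ _ "nat x"]) auto
  thus ?thesis by auto
qed

lemma img2: "{- int N - 2..<0} = (\<lambda>i. - int i - 1) ` {..<N + 2}"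
proof -
  have "x \<in> (\<lambda>i. - int i - 1) ` {..<N + 2}" if "x \<in> {- int N - 2..<0}" for x
    using that by (intro image_eqI[of _ _ "nat (- x - 1)"]) auto
  thus ?thesis by auto
qed

lemma Phi_bound:
  assumes "\<bar>k\<bar> \<le> int N" "\<bar>h\<bar> \<le> int N"
  shows "Phi N (k,h) \<le> exp (3 * real N + 3) * exp (3 * real N + 3)"
proof -
  define A where "A = 3 * real N + 3"
  have A0: "A \<ge> 0" unfolding A_def by simp
  have "Phi N (k,h) \<le> (\<Prod>j\<in>LL N h. A / jb (real_of_int j))"
    unfolding Phi_def fst_conv snd_conv
  proof (rule prod_mono)
    fix j assume j: "j \<in> LL N h"
    hence jj: "- int N - 2 \<le> j" "j < h" unfolding LL_def by auto
    have "max (k + h - j) \<bar>j\<bar> \<le> 3 * int N + 2" using jj assms by auto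
    hence "jb (real_of_int (max (k + h - j) \<bar>j\<bar>)) \<le> A"
      unfolding jb_def A_def by (simp del: of_int_max) linarith
    hence "rr (k + h) j \<le> A / jb (real_of_int j)"
      unfolding rr_def using jb_pos by (intro divide_right_mono) (auto intro: less_imp_le)
    thus "0 \<le> rr (k + h) j \<and> rr (k + h) j \<le> A / jb (real_of_int j)"
      using rr_ge1[of "k+h" j] by auto
  qed
  also have "\<dots> \<le> (\<Prod>j\<in>{- int N - 2..<int N}. A / jb (real_of_int j))"
  proof (rule prod_mono2)
    show "LL N h \<subseteq> {- int N - 2..<int N}" using assms unfolding LL_def by auto
    fix b assume "b \<in> {- int N - 2..<int N} - LL N h"
    hence "jb (real_of_int b) \<le> A" unfolding jb_def A_def by auto
    thus "1 \<le> A / jb (real_of_int b)" using jb_pos[of "real_of_int b"] by simp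
  qed (use A0 jb_pos in \<open>auto intro!: divide_nonneg_pos\<close>)
  also have "\<dots> = (\<Prod>j\<in>{- int N - 2..<0}. A / jb (real_of_int j)) * (\<Prod>j\<in>{0..<int N}. A / jb (real_of_int j))"
  proof -
    have "{- int N - 2..<int N} = {- int N - 2..<0} \<union> {0..<int N}" by auto
    thus ?thesis by (simp add: prod.union_disjoint)
  qed
  also have "\<dots> \<le> exp A * exp A"
  proof (rule mult_mono)
    have "(\<Prod>j\<in>{- int N - 2..<0}. A / jb (real_of_int j)) = (\<Prod>i<N+2. A / jb (real_of_int (- int i - 1)))"
      unfolding img2 by (subst prod.reindex) (auto simp: inj_on_def)
    also have "\<dots> \<le> (\<Prod>i<N+2. A / real (Suc i))"
      by (rule prod_mono) (use A0 in \<open>auto simp: jb_def intro!: divide_left_mono\<close>)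
    also have "\<dots> \<le> exp A" by (rule prod_A_le_exp[OF A0])
    finally show "(\<Prod>j\<in>{- int N - 2..<0}. A / jb (real_of_int j)) \<le> exp A" .
    have "(\<Prod>j\<in>{0..<int N}. A / jb (real_of_int j)) = (\<Prod>i<N. A / jb (real i))"
      unfolding img1 by (subst prod.reindex) (auto simp: inj_on_def)
    also have "\<dots> = (\<Prod>i<N. A / real (Suc i))" by (simp add: jb_def add.commute)
    also have "\<dots> \<le> exp A" by (rule prod_A_le_exp[OF A0])
    finally show "(\<Prod>j\<in>{0..<int N}. A / jb (real_of_int j)) \<le> exp A" .
  qed (use A0 in \<open>auto intro!: prod_nonneg simp: jb_def\<close>)
  finally show ?thesis unfolding A_def .
qed

lemma path_main:
  assumes "is_path (Gsum G1 G2) p l" "\<forall>i\<le>l. - int N \<le> snd (p i)"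
  shows "path_weight (Gsum G1 G2) p l * Phi N (p 0) \<le> 9 ^ l * Phi N (p l)"
  using assms
proof (induction l)
  case 0
  then show ?case by (simp add: path_weight_def)
next
  case (Suc l)
  have ip: "is_path (Gsum G1 G2) p l" using Suc.prems(1) unfolding is_path_def by auto
  have IH: "path_weight (Gsum G1 G2) p l * Phi N (p 0) \<le> 9 ^ l * Phi N (p l)"
    using Suc.IH ip Suc.prems(2) by auto
  define w where "w = Gsum G1 G2 (p l) (p (Suc l))"
  have wpos: "w > 0" using Suc.prems(1) unfolding is_path_def w_def
    by (metis atLeastAtMost_iff diff_Suc_1 le_add1 order_refl plus_1_eq_Suc)
  have pw: "path_weight (Gsum G1 G2) p (Suc l) = path_weight (Gsum G1 G2) p l * w"
    unfolding path_weight_def w_def by (simp add: prod.cl_ivl_Suc)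
  have st: "w * Phi N (p l) \<le> 9 * Phi N (p (Suc l))"
    using step[of "fst (p l)" "snd (p l)" "fst (p (Suc l))" "snd (p (Suc l))" N] wpos Suc.prems(2)
    unfolding w_def by auto
  have "path_weight (Gsum G1 G2) p (Suc l) * Phi N (p 0) = w * (path_weight (Gsum G1 G2) p l * Phi N (p 0))"
    using pw by simp
  also have "\<dots> \<le> w * (9 ^ l * Phi N (p l))"
    using IH wpos by (intro mult_left_mono) auto
  also have "\<dots> = 9 ^ l * (w * Phi N (p l))" by simp
  also have "\<dots> \<le> 9 ^ l * (9 * Phi N (p (Suc l)))"
    using st by (intro mult_left_mono) auto
  finally show ?case by simp
qed

lemma nine_le: "(9::real) ^ l \<le> exp (4 * real l)"
proof -
  have "(3::real) \<le> exp 2" using exp_ge_add_one_self[of 2] by simp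
  hence "(3::real) ^ (2 * l) \<le> exp 2 ^ (2 * l)" by (intro power_mono) auto
  also have "\<dots> = exp (4 * real l)" by (simp add: exp_of_nat_mult[symmetric])
  finally show ?thesis by (simp add: power_mult)
qed

theorem mainTheorem10:
  shows "\<exists>C2 :: real. C2 > 0 \<and>
    (\<forall>(l::nat) (p::nat \<Rightarrow> pt). is_path (Gsum G1 G2) p l \<longrightarrow>
       path_weight (Gsum G1 G2) p l \<le> C2 powr (real l + Max (ptnorm ` p ` {0..l})))"
proof (intro exI[of _ "exp 20"] conjI allI impI)
  show "exp 20 > (0::real)" by simp
  fix l and p :: "nat \<Rightarrow> pt"
  assume ip: "is_path (Gsum G1 G2) p l"
  define Mn where "Mn = Max (ptnorm ` p ` {0..l})"
  have pn: "ptnorm (p i) \<le> Mn" if "i \<le> l" for i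
    unfolding Mn_def using that by (intro Max_ge) auto
  have Mn0: "Mn \<ge> 0" using pn[of 0] unfolding ptnorm_def by (meson order_trans real_sqrt_ge_zero sum_power2_ge_zero le0)
  define N where "N = nat \<lceil>Mn\<rceil>"
  have NM: "real N \<le> Mn + 1" "Mn \<le> real N" unfolding N_def using Mn0 by linarith+
  have bnd: "\<bar>fst (p i)\<bar> \<le> int N \<and> \<bar>snd (p i)\<bar> \<le> int N" if "i \<le> l" for i
  proof -
    have "\<bar>real_of_int (fst (p i))\<bar> \<le> Mn" "\<bar>real_of_int (snd (p i))\<bar> \<le> Mn"
      using pn[OF that] real_sqrt_ge_abs1 real_sqrt_ge_abs2 unfolding ptnorm_def
      by (meson order_trans)+
    thus ?thesis using NM by linarith
  qed
  have wnn: "path_weight (Gsum G1 G2) p l \<ge> 0"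
    using ip unfolding path_weight_def is_path_def by (auto intro!: prod_nonneg less_imp_le prod_pos)
  have "path_weight (Gsum G1 G2) p l \<le> path_weight (Gsum G1 G2) p l * Phi N (p 0)"
    using wnn Phi_ge1[of N "p 0"] by (simp add: mult_le_cancel_left1)
  also have "\<dots> \<le> 9 ^ l * Phi N (p l)"
    by (rule path_main[OF ip]) (use bnd in \<open>fastforce simp: abs_le_iff\<close>)
  also have "\<dots> \<le> exp (4 * real l) * (exp (3 * real N + 3) * exp (3 * real N + 3))"
    using bnd[of l] Phi_bound[of "fst (p l)" N "snd (p l)"] nine_le[of l] Phi_ge1[of N "p l"]
    by (intro mult_mono) auto
  also have "\<dots> = exp (4 * real l + 6 * real N + 6)" by (simp add: exp_add[symmetric])
  finally have W: "path_weight (Gsum G1 G2) p l \<le> exp (4 * real l + 6 * real N + 6)" .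
  have E: "exp 20 powr (real l + Mn) = exp (20 * (real l + Mn))" by (simp add: powr_def)
  show "path_weight (Gsum G1 G2) p l \<le> exp 20 powr (real l + Max (ptnorm ` p ` {0..l}))"
  proof (cases "l = 0")
    case True
    hence "path_weight (Gsum G1 G2) p l = 1" by (simp add: path_weight_def)
    thus ?thesis using True Mn0 unfolding E[unfolded Mn_def] Mn_def by simp
  next
    case False
    have "exp (4 * real l + 6 * real N + 6) \<le> exp (20 * (real l + Mn))"
    proof -
      have "real l \<ge> 1" using False by simp
      thus ?thesis using NM Mn0 by simp
    qed
    with W have "path_weight (Gsum G1 G2) p l \<le> exp (20 * (real l + Mn))" by (rule order_trans)
    thus ?thesis using E unfolding Mn_def by simp
  qed
qed

end
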